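(* Let $n\ge3$, $\mathfrak{g}=o(2n)$ in split form, and let $r_{BD}$ be the Belavin–Drinfeld $r$-matrix associated to the admissible triple $\Gamma_1=\{\alpha_{n-1}\}$, $\Gamma_2=\{\alpha_n\}$, $\tau(\alpha_{n-1})=\alpha_n$ (with some admissible $r_0$). Then $C(r_{BD})$ consists exactly of the diagonal matrices $T=\mathrm{diag}(t_1,\dots,t_{n-1},\eta,\eta,t_{n-1}^{-1},\dots,t_1^{-1})$ with $t_1,\dots,t_{n-1}\in\overline{\mathbb{K}}^\times$ arbitrary and $\eta\in\{1,-1\}$.
   Context: $\mathbb{K}=\mathbb{C}((\hbar))$, $\overline{\mathbb{K}}$ its algebraic closure. $S$ is the $2n\times2n$ antidiagonal matrix of ones; $o(2n)=\{A:A^TS+SA=0\}$, $O(2n)=\{X:X^TSX=S\}$ acting by conjugation. The Cartan subalgebra consists of $\mathrm{diag}(a_1,\dots,a_n,-a_n,\dots,-a_1)$; $\epsilon_i$ is the functional giving $a_i$; simple roots $\alpha_i=\epsilon_i-\epsilon_{i+1}$ ($i<n$), $\alpha_n=\epsilon_{n-1}+\epsilon_n$; positive roots correspond to the upper triangular part. $e_{\pm\alpha}$ are root vectors normalized by the invariant form, $\Omega$ the Casimir element, $\Omega_0$ its Cartan part. The $r$-matrix is $r_{BD}=r_0+\sum_{\alpha>0}e_\alpha\otimes e_{-\alpha}+e_{\alpha_{n-1}}\wedge e_{-\alpha_n}$ with $r_0\in\mathfrak{h}(\overline{\mathbb{K}})^{\otimes2}$, $r_0+r_0^{21}=\Omega_0$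 and $(\alpha_n\otimes1+1\otimes\alpha_{n-1})(r_0)=0$; $a\wedge b=a\otimes b-b\otimes a$. $C(r)=\{X\in O(2n,\overline{\mathbb{K}}):(\mathrm{Ad}_X\otimes\mathrm{Ad}_X)(r)=r\}$. *)

theory Defs
  imports "HOL-Algebra.Algebraic_Closure_Type" "Jordan_Normal_Form.Matrix"
begin

section \<open>The field Kbar = algebraic closure of C((h))\<close>

type_synonym Kbar = "complex fls alg_closure"

text \<open>Mirror index: i' = 2n-1-i (0-based version of i' = 2n+1-i).\<close>
definition mir :: "nat \<Rightarrow> nat \<Rightarrow> nat" where
  "mir n i = 2*n - 1 - i"

definition Eu :: "nat \<Rightarrow> nat \<Rightarrow> nat \<Rightarrow> 'a::{zero,one} mat" where
  "Eu N i j = mat N N (\<lambda>(k,l). if k = i \<and> l = j then 1 else 0)"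

definition Smat :: "nat \<Rightarrow> 'a::{zero,one} mat" where
  "Smat n = mat (2*n) (2*n) (\<lambda>(i,j). if i + j = 2*n - 1 then 1 else 0)"

definition orth_grp :: "nat \<Rightarrow> 'a::field mat set" where
  "orth_grp n = {M. M \<in> carrier_mat (2*n) (2*n) \<and> transpose_mat M * Smat n * M = Smat n}"

definition minv :: "nat \<Rightarrow> 'a::field mat \<Rightarrow> 'a mat" where
  "minv N M = (THE Y. Y \<in> carrier_mat N N \<and> M * Y = 1\<^sub>m N \<and> Y * M = 1\<^sub>m N)"

text \<open>A tensor is given by its coordinates: t i j k l is the coefficient of E_ij (x) E_kl
  (and 0 outside the index range).\<close>
type_synonym 'a tensor = "nat \<Rightarrow> nat \<Rightarrow> nat \<Rightarrow> nat \<Rightarrow> 'a"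

definition tens :: "nat \<Rightarrow> 'a::comm_ring_1 mat \<Rightarrow> 'a mat \<Rightarrow> 'a tensor" where
  "tens N A B = (\<lambda>i j k l. if i < N \<and> j < N \<and> k < N \<and> l < N
                             then A $$ (i,j) * B $$ (k,l) else 0)"

definition tadd :: "'a::comm_ring_1 tensor \<Rightarrow> 'a tensor \<Rightarrow> 'a tensor" where
  "tadd t s = (\<lambda>i j k l. t i j k l + s i j k l)"

definition tsum :: "('b \<Rightarrow> 'a::comm_ring_1 tensor) \<Rightarrow> 'b set \<Rightarrow> 'a tensor" where
  "tsum f A = (\<lambda>i j k l. \<Sum>x\<in>A. f x i j k l)"

definition wedge :: "nat \<Rightarrow> 'a::comm_ring_1 mat \<Rightarrow> 'a mat \<Rightarrow> 'a tensor" where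
  "wedge N a b = (\<lambda>i j k l. tens N a b i j k l - tens N b a i j k l)"

definition flip21 :: "'a tensor \<Rightarrow> 'a tensor" where
  "flip21 t = (\<lambda>i j k l. t k l i j)"

text \<open>(Ad_X (x) Ad_X)(t), where Ad_X A = M A M^{-1}.\<close>
definition AdAd :: "nat \<Rightarrow> 'a::field mat \<Rightarrow> 'a tensor \<Rightarrow> 'a tensor" where
  "AdAd N M t = (let Y = minv N M in
     (\<lambda>i j k l. if i < N \<and> j < N \<and> k < N \<and> l < N then
        (\<Sum>p<N. \<Sum>q<N. \<Sum>s<N. \<Sum>u<N.
           M $$ (i,p) * t p q s u * Y $$ (q,j) * M $$ (k,s) * Y $$ (u,l))
      else 0))"

text \<open>(phi (x) 1)(t) and (1 (x) phi)(t) for a linear functional phi on matrices.\<close>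
definition contr1 :: "nat \<Rightarrow> ('a::comm_ring_1 mat \<Rightarrow> 'a) \<Rightarrow> 'a tensor \<Rightarrow> 'a mat" where
  "contr1 N \<phi> t = mat N N (\<lambda>(k,l). \<Sum>i<N. \<Sum>j<N. \<phi> (Eu N i j) * t i j k l)"

definition contr2 :: "nat \<Rightarrow> ('a::comm_ring_1 mat \<Rightarrow> 'a) \<Rightarrow> 'a tensor \<Rightarrow> 'a mat" where
  "contr2 N \<phi> t = mat N N (\<lambda>(i,j). \<Sum>k<N. \<Sum>l<N. \<phi> (Eu N k l) * t i j k l)"

text \<open>Cartan basis H_m = E_mm - E_m'm' (m < n, 0-based); diag(a_1..a_n,-a_n..-a_1) = sum a_m H_m.\<close>
definition Hc :: "nat \<Rightarrow> nat \<Rightarrow> 'a::comm_ring_1 mat" where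
  "Hc n m = Eu (2*n) m m - Eu (2*n) (mir n m) (mir n m)"

definition eps :: "nat \<Rightarrow> 'a mat \<Rightarrow> 'a" where
  "eps m A = A $$ (m,m)"

text \<open>Simple roots alpha_{n-1} = eps_{n-1} - eps_n and alpha_n = eps_{n-1} + eps_n
  (1-based; 0-based indices n-2, n-1).\<close>
definition alpha_nm1 :: "nat \<Rightarrow> 'a::comm_ring_1 mat \<Rightarrow> 'a" where
  "alpha_nm1 n A = eps (n-2) A - eps (n-1) A"
definition alpha_n :: "nat \<Rightarrow> 'a::comm_ring_1 mat \<Rightarrow> 'a" where
  "alpha_n n A = eps (n-2) A + eps (n-1) A"

text \<open>Root vectors, normalized so that <e_alpha, e_-alpha> = 1 for the invariant form
  <A,B> = tr(AB)/2 (w.r.t. which the H_m are orthonormal).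
  Positive roots: eps_i - eps_j and eps_i + eps_j for i < j < n (0-based).\<close>
definition e_minus_pos :: "nat \<Rightarrow> nat \<Rightarrow> nat \<Rightarrow> 'a::comm_ring_1 mat" where
  "e_minus_pos n i j = Eu (2*n) i j - Eu (2*n) (mir n j) (mir n i)"
definition e_minus_neg :: "nat \<Rightarrow> nat \<Rightarrow> nat \<Rightarrow> 'a::comm_ring_1 mat" where
  "e_minus_neg n i j = Eu (2*n) j i - Eu (2*n) (mir n i) (mir n j)"
definition e_plus_pos :: "nat \<Rightarrow> nat \<Rightarrow> nat \<Rightarrow> 'a::comm_ring_1 mat" where
  "e_plus_pos n i j = Eu (2*n) i (mir n j) - Eu (2*n) j (mir n i)"
definition e_plus_neg :: "nat \<Rightarrow> nat \<Rightarrow> nat \<Rightarrow> 'a::comm_ring_1 mat" where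
  "e_plus_neg n i j = Eu (2*n) (mir n j) i - Eu (2*n) (mir n i) j"

definition pos_pairs :: "nat \<Rightarrow> (nat \<times> nat) set" where
  "pos_pairs n = {(i,j). i < j \<and> j < n}"

definition Omega0 :: "nat \<Rightarrow> 'a::comm_ring_1 tensor" where
  "Omega0 n = tsum (\<lambda>m. tens (2*n) (Hc n m) (Hc n m)) {..<n}"

definition rzero :: "nat \<Rightarrow> (nat \<Rightarrow> nat \<Rightarrow> 'a::comm_ring_1) \<Rightarrow> 'a tensor" where
  "rzero n c = tsum (\<lambda>(m,k). (\<lambda>i j p q. c m k * tens (2*n) (Hc n m) (Hc n k) i j p q))
                    ({..<n} \<times> {..<n})"

definition admissible_r0 :: "nat \<Rightarrow> (nat \<Rightarrow> nat \<Rightarrow> 'a::comm_ring_1) \<Rightarrow> bool" where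
  "admissible_r0 n c \<longleftrightarrow>
     tadd (rzero n c) (flip21 (rzero n c)) = Omega0 n \<and>
     contr1 (2*n) (alpha_n n) (rzero n c) + contr2 (2*n) (alpha_nm1 n) (rzero n c) = 0\<^sub>m (2*n) (2*n)"

definition r_BD :: "nat \<Rightarrow> (nat \<Rightarrow> nat \<Rightarrow> 'a::comm_ring_1) \<Rightarrow> 'a tensor" where
  "r_BD n c =
     tadd (rzero n c)
      (tadd (tsum (\<lambda>(i,j). tadd (tens (2*n) (e_minus_pos n i j) (e_minus_neg n i j))
                                (tens (2*n) (e_plus_pos n i j) (e_plus_neg n i j))) (pos_pairs n))
            (wedge (2*n) (e_minus_pos n (n-2) (n-1)) (e_plus_neg n (n-2) (n-1))))"

definition centr :: "nat \<Rightarrow> 'a::field tensor \<Rightarrow> 'a mat set" where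
  "centr n r = {M \<in> orth_grp n. AdAd (2*n) M r = r}"

definition Tdiag :: "nat \<Rightarrow> (nat \<Rightarrow> 'a::field) \<Rightarrow> 'a \<Rightarrow> 'a mat" where
  "Tdiag n t \<eta> = mat (2*n) (2*n) (\<lambda>(i,j).
      if i \<noteq> j then 0
      else if i < n - 1 then t i
      else if i = n - 1 \<or> i = n then \<eta>
      else inverse (t (mir n i)))"

end

theory Submission
  imports Defs "Jordan_Normal_Form.Determinant"
begin


lemma Eu_idx[simp]: "i < N \<Longrightarrow> j < N \<Longrightarrow> Eu N a b $$ (i,j) = (if i = a \<and> j = b then 1 else 0)"
  by (simp add: Eu_def)
lemma Eu_carrier[simp]: "Eu N a b \<in> carrier_mat N N" "dim_row (Eu N a b) = N" "dim_col (Eu N a b) = N"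
  by (auto simp: Eu_def)

lemma sum_if_single:
  assumes "finite A" "\<And>x. x\<in>A \<Longrightarrow> P x \<Longrightarrow> x = xz"
  shows "(\<Sum>x\<in>A. if P x then (v::'a::comm_monoid_add) else 0) = (if xz \<in> A \<and> P xz then v else 0)"
proof (cases "xz \<in> A \<and> P xz")
  case True
  have "(\<Sum>x\<in>A. if P x then v else 0) = (\<Sum>x\<in>A. if x = xz then v else 0)"
  proof (rule sum.cong)
    fix x assume "x \<in> A" then show "(if P x then v else 0) = (if x = xz then v else 0)"
      using assms(2)[of x] True by (cases "P x") auto
  qed simp
  then show ?thesis using True assms(1) by simp
next
  case False
  have "(\<Sum>x\<in>A. if P x then v else 0) = (\<Sum>x\<in>A. 0)"
  proof (rule sum.cong)
    fix x assume "x \<in> A" then show "(if P x then v else 0) = 0"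
      using assms(2)[of x] False by (cases "P x") auto
  qed simp
  then show ?thesis using False by auto
qed

lemma finite_pos_pairs[simp]: "finite (pos_pairs n)"
proof -
  have "pos_pairs n \<subseteq> {..<n} \<times> {..<n}" by (auto simp: pos_pairs_def)
  then show ?thesis by (rule finite_subset) auto
qed

definition RP :: "nat \<Rightarrow> nat \<Rightarrow> nat \<Rightarrow> nat \<Rightarrow> nat \<Rightarrow> 'a::comm_ring_1" where
  "RP n i j k l = (if i < j \<and> i + j \<noteq> 2*n - 1 then
     (if k = j \<and> l = i then 1 else 0) - (if k = 2*n-1-i \<and> l = 2*n-1-j then 1 else 0) else 0)"

definition Ppos :: "nat \<Rightarrow> 'a::comm_ring_1 tensor" where
  "Ppos n = tsum (\<lambda>(i,j). tadd (tens (2*n) (e_minus_pos n i j) (e_minus_neg n i j))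
                                (tens (2*n) (e_plus_pos n i j) (e_plus_neg n i j))) (pos_pairs n)"

lemma ind_mult: "(if P then (1::'a::comm_ring_1) else 0) * (if Q then 1 else 0) = (if P \<and> Q then 1 else 0)"
  by simp

lemma summand_eq:
  assumes "i < 2*n" "j < 2*n" "k < 2*n" "l < 2*n"
  shows "tadd (tens (2*n) (e_minus_pos n a b) (e_minus_neg n a b))
                                (tens (2*n) (e_plus_pos n a b) (e_plus_neg n a b)) i j k l =
   (if i=a \<and> j=b \<and> k=b \<and> l=a then 1 else 0)
 - (if i=a \<and> j=b \<and> k=2*n-1-a \<and> l=2*n-1-b then 1 else 0)
 - (if i=2*n-1-b \<and> j=2*n-1-a \<and> k=b \<and> l=a then 1 else 0)
 + (if i=2*n-1-b \<and> j=2*n-1-a \<and> k=2*n-1-a \<and> l=2*n-1-b then 1 else (0::'a::comm_ring_1))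
 + (if i=a \<and> j=2*n-1-b \<and> k=2*n-1-b \<and> l=a then 1 else 0)
 - (if i=a \<and> j=2*n-1-b \<and> k=2*n-1-a \<and> l=b then 1 else 0)
 - (if i=b \<and> j=2*n-1-a \<and> k=2*n-1-b \<and> l=a then 1 else 0)
 + (if i=b \<and> j=2*n-1-a \<and> k=2*n-1-a \<and> l=b then 1 else 0)"
proof -
  have "(2::nat)*n - 1 - b < 2*n" "(2::nat)*n - 1 - a < 2*n" using assms by auto
  note * = assms this
  show ?thesis
  unfolding tadd_def tens_def e_minus_pos_def e_minus_neg_def e_plus_pos_def e_plus_neg_def mir_def
  apply (simp only: * if_True conj_absorb index_minus_mat Eu_carrier Eu_idx refl simp_thms)
  apply (simp only: left_diff_distrib right_diff_distrib ind_mult conj_assoc)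
  apply (simp only: algebra_simps)
  done
qed
lemma Ppos_eq:
  assumes "i < 2*n" "j < 2*n" "k < 2*n" "l < 2*n"
  shows "Ppos n i j k l = (RP n i j k l :: 'a::comm_ring_1)"
proof -
  let ?P = "pos_pairs n"
  have "Ppos n i j k l = (\<Sum>x\<in>?P. 
   (if i=fst x \<and> j=snd x \<and> k=snd x \<and> l=fst x then 1 else 0)
 - (if i=fst x \<and> j=snd x \<and> k=2*n-1-fst x \<and> l=2*n-1-snd x then 1 else 0)
 - (if i=2*n-1-snd x \<and> j=2*n-1-fst x \<and> k=snd x \<and> l=fst x then 1 else 0)
 + (if i=2*n-1-snd x \<and> j=2*n-1-fst x \<and> k=2*n-1-fst x \<and> l=2*n-1-snd x then 1 else (0::'a))
 + (if i=fst x \<and> j=2*n-1-snd x \<and> k=2*n-1-snd x \<and> l=fst x then 1 else 0)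
 - (if i=fst x \<and> j=2*n-1-snd x \<and> k=2*n-1-fst x \<and> l=snd x then 1 else 0)
 - (if i=snd x \<and> j=2*n-1-fst x \<and> k=2*n-1-snd x \<and> l=fst x then 1 else 0)
 + (if i=snd x \<and> j=2*n-1-fst x \<and> k=2*n-1-fst x \<and> l=snd x then 1 else 0))"
    unfolding Ppos_def tsum_def
    apply (rule sum.cong[OF refl])
    subgoal for x by (cases x, hypsubst, simp only: case_prod_conv summand_eq[OF assms] fst_conv snd_conv)
    done
  also have "\<dots> = 
   (if i<j \<and> j<n \<and> k=j \<and> l=i then 1 else 0)
 - (if i<j \<and> j<n \<and> k=2*n-1-i \<and> l=2*n-1-j then 1 else 0)
 - (if n \<le> i \<and> i < j \<and> k=2*n-1-i \<and> l=2*n-1-j then 1 else 0)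
 + (if n \<le> i \<and> i < j \<and> k=j \<and> l=i then 1 else 0)
 + (if i < n \<and> n \<le> j \<and> i + j < 2*n-1 \<and> k=j \<and> l=i then 1 else 0)
 - (if i < n \<and> n \<le> j \<and> i + j < 2*n-1 \<and> k=2*n-1-i \<and> l=2*n-1-j then 1 else 0)
 - (if i < n \<and> n \<le> j \<and> i + j > 2*n-1 \<and> k=2*n-1-i \<and> l=2*n-1-j then 1 else 0)
 + (if i < n \<and> n \<le> j \<and> i + j > 2*n-1 \<and> k=j \<and> l=i then 1 else 0)"
    apply (simp only: sum.distrib sum_subtractf)
    apply (subst sum_if_single[where xz="(i,j)"], simp, force)+
    apply (subst sum_if_single[where xz="(l,k)"], simp, force simp: pos_pairs_def)
    apply (subst sum_if_single[where xz="(2*n-1-j,2*n-1-i)"], simp, force simp: pos_pairs_def)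
    apply (subst sum_if_single[where xz="(i,2*n-1-j)"], simp, force simp: pos_pairs_def)
    apply (subst sum_if_single[where xz="(i,l)"], simp, force simp: pos_pairs_def)
    apply (subst sum_if_single[where xz="(l,i)"], simp, force simp: pos_pairs_def)
    apply (subst sum_if_single[where xz="(2*n-1-j,i)"], simp, force simp: pos_pairs_def)
    using assms apply (intro arg_cong2[where f="(+)"] arg_cong2[where f="(-)"] if_cong refl; auto simp: pos_pairs_def)
    done
  also have "\<dots> = RP n i j k l"
    using assms unfolding RP_def
    by (cases "i<j"; cases "j<n"; cases "n \<le> i"; cases "i+j<2*n-1"; cases "i+j = 2*n-1"; simp)
  finally show ?thesis .
qed




lemma sum_only:
  assumes "finite A" "a \<in> A" "\<And>x. x\<in>A \<Longrightarrow> x\<noteq>a \<Longrightarrow> g x = 0"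
  shows "sum g A = g a"
proof -
  have "sum g A = g a + sum g (A - {a})" using assms by (simp add: sum.remove)
  also have "sum g (A - {a}) = 0" using assms by (intro sum.neutral) auto
  finally show ?thesis by simp
qed

lemma sum_only2:
  assumes "finite A" "a \<in> A" "b \<in> A" "a \<noteq> b" "\<And>x. x\<in>A \<Longrightarrow> x\<noteq>a \<Longrightarrow> x \<noteq> b \<Longrightarrow> g x = 0"
  shows "sum g A = g a + g b"
proof -
  have "sum g A = g a + sum g (A - {a})" using assms by (simp add: sum.remove)
  also have "sum g (A - {a}) = g b" using assms by (intro sum_only) auto
  finally show ?thesis by simp
qed

definition ee :: "nat \<Rightarrow> nat \<Rightarrow> nat \<Rightarrow> 'a::comm_ring_1" where
  "ee n i j = (if i=n-2 \<and> j=n-1 then 1 else 0) - (if i=n \<and> j=n+1 then 1 else 0)"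
definition ff :: "nat \<Rightarrow> nat \<Rightarrow> nat \<Rightarrow> 'a::comm_ring_1" where
  "ff n i j = (if i=n \<and> j=n-2 then 1 else 0) - (if i=n+1 \<and> j=n-1 then 1 else 0)"

lemma wedge_eq:
  assumes "n \<ge> 2" "i < 2*n" "j < 2*n" "k < 2*n" "l < 2*n"
  shows "wedge (2*n) (e_minus_pos n (n-2) (n-1)) (e_plus_neg n (n-2) (n-1)) i j k l
     = (ee n i j * ff n k l - ff n i j * ee n k l :: 'a::comm_ring_1)"
proof -
  have m: "mir n (n-1) = n" "mir n (n-2) = n+1" using assms by (auto simp: mir_def)
  show ?thesis using assms
    unfolding wedge_def tens_def e_minus_pos_def e_plus_neg_def m ee_def ff_def
    by (simp add: index_minus_mat)
qed

lemma Hc_idx: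
  assumes "i < 2*n" "j < 2*n"
  shows "Hc n m $$ (i,j) = (if i = j then (if i = m then 1 else 0) - (if i = 2*n-1-m then 1 else 0) else (0::'a::comm_ring_1))"
  using assms unfolding Hc_def mir_def by (simp add: index_minus_mat)

lemma rzero_idx:
  assumes "i < 2*n" "j < 2*n" "k < 2*n" "l < 2*n"
  shows "rzero n c i j k l = (\<Sum>x\<in>{..<n}\<times>{..<n}. c (fst x) (snd x) * (Hc n (fst x) $$ (i,j) * Hc n (snd x) $$ (k,l)))"
  unfolding rzero_def tsum_def
  apply (rule sum.cong[OF refl])
  subgoal for x by (cases x, hypsubst, simp add: tens_def assms)
  done

lemma rzero_off:
  assumes "i < 2*n" "j < 2*n" "k < 2*n" "l < 2*n" "i \<noteq> j \<or> k \<noteq> l"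
  shows "rzero n c i j k l = 0"
  unfolding rzero_idx[OF assms(1-4)] using assms by (intro sum.neutral) (auto simp: Hc_idx)

lemma rzero_out:
  assumes "\<not> (i < 2*n \<and> j < 2*n \<and> k < 2*n \<and> l < 2*n)"
  shows "rzero n c i j k l = 0"
  unfolding rzero_def tsum_def
  apply (rule sum.neutral) using assms by (auto simp: tens_def split: prod.splits)

lemma Omega0_diag:
  assumes "i < 2*n"
  shows "Omega0 n i i i i = (1::'a::comm_ring_1)"
proof -
  have "Omega0 n i i i i = (\<Sum>m<n. Hc n m $$ (i,i) * Hc n m $$ (i,i) :: 'a)"
    unfolding Omega0_def tsum_def tens_def using assms by simp
  also have "\<dots> = 1"
  proof (cases "i < n")
    case True
    then show ?thesis using assms
      by (subst sum_only[where a=i]) (auto simp: Hc_idx)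
  next
    case False
    then show ?thesis using assms
      by (subst sum_only[where a="2*n-1-i"]) (auto simp: Hc_idx)
  qed
  finally show ?thesis .
qed

lemma rzero_diag:
  assumes "admissible_r0 n (c :: nat \<Rightarrow> nat \<Rightarrow> 'a::field_char_0)" "i < 2*n"
  shows "rzero n c i i i i = 1/2"
proof -
  from assms(1) have "tadd (rzero n c) (flip21 (rzero n c)) = Omega0 n" by (simp add: admissible_r0_def)
  then have "tadd (rzero n c) (flip21 (rzero n c)) i i i i = Omega0 n i i i i" by simp
  then have "rzero n c i i i i + rzero n c i i i i = 1"
    using Omega0_diag[OF assms(2)] by (simp add: tadd_def flip21_def)
  then show ?thesis by (simp add: field_simps)
qed

lemma rBD_alt: "r_BD n c = tadd (rzero n c) (tadd (Ppos n) (wedge (2*n) (e_minus_pos n (n-2) (n-1)) (e_plus_neg n (n-2) (n-1))))"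
  unfolding r_BD_def Ppos_def ..

lemma rBD_eq:
  assumes "n \<ge> 2" "i < 2*n" "j < 2*n" "k < 2*n" "l < 2*n"
  shows "r_BD n c i j k l = rzero n c i j k l + RP n i j k l + (ee n i j * ff n k l - ff n i j * ee n k l)"
  unfolding rBD_alt tadd_def Ppos_eq[OF assms(2-5)] wedge_eq[OF assms] by (simp add: add.assoc)

lemma rBD_out:
  fixes c :: "nat \<Rightarrow> nat \<Rightarrow> 'a::comm_ring_1"
  assumes "\<not> (i < 2*n \<and> j < 2*n \<and> k < 2*n \<and> l < 2*n)"
  shows "r_BD n c i j k l = 0"
proof -
  have "(Ppos n i j k l :: 'a) = 0"
    unfolding Ppos_def tsum_def
    apply (rule sum.neutral) using assms by (auto simp: tens_def tadd_def split: prod.splits)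
  moreover have "wedge (2*n) (e_minus_pos n (n-2) (n-1)) (e_plus_neg n (n-2) (n-1)) i j k l = (0::'a)"
    using assms by (auto simp: wedge_def tens_def)
  ultimately show ?thesis
    unfolding rBD_alt tadd_def rzero_out[OF assms] by simp
qed


lemma rBD_v1:
  assumes "n \<ge> 3"
  shows "r_BD n c (n-2) (n-1) (n-1) (n-2) = 1"
proof -
  have "r_BD n c (n-2) (n-1) (n-1) (n-2) = rzero n c (n-2) (n-1) (n-1) (n-2) + RP n (n-2) (n-1) (n-1) (n-2) + (ee n (n-2) (n-1) * ff n (n-1) (n-2) - ff n (n-2) (n-1) * ee n (n-1) (n-2))"
    using assms by (intro rBD_eq) auto
  also have "rzero n c (n-2) (n-1) (n-1) (n-2) = 0" using assms by (intro rzero_off) auto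
  also have "RP n (n-2) (n-1) (n-1) (n-2) = 1" using assms by (auto simp: RP_def)
  also have "ff n (n-1) (n-2) = 0" using assms by (simp add: ff_def)
  also have "ff n (n-2) (n-1) = 0" using assms by (simp add: ff_def)
  finally show ?thesis by simp
qed

lemma rBD_v2:
  assumes "n \<ge> 3"
  shows "r_BD n c (n-2) (n-1) n (n-2) = 1"
proof -
  have "r_BD n c (n-2) (n-1) n (n-2) = rzero n c (n-2) (n-1) n (n-2) + RP n (n-2) (n-1) n (n-2) + (ee n (n-2) (n-1) * ff n n (n-2) - ff n (n-2) (n-1) * ee n n (n-2))"
    using assms by (intro rBD_eq) auto
  also have "rzero n c (n-2) (n-1) n (n-2) = 0" using assms by (intro rzero_off) auto
  also have "RP n (n-2) (n-1) n (n-2) = 0" using assms by (auto simp: RP_def)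
  also have "ee n (n-2) (n-1) = 1" using assms by (auto simp: ee_def)
  also have "ff n n (n-2) = 1" using assms by (auto simp: ff_def)
  also have "ff n (n-2) (n-1) = 0" using assms by (simp add: ff_def)
  finally show ?thesis by simp
qed

lemma rBD_v3:
  assumes "n \<ge> 3"
  shows "r_BD n c (n-2) n n (n-2) = 1"
proof -
  have "r_BD n c (n-2) n n (n-2) = rzero n c (n-2) n n (n-2) + RP n (n-2) n n (n-2) + (ee n (n-2) n * ff n n (n-2) - ff n (n-2) n * ee n n (n-2))"
    using assms by (intro rBD_eq) auto
  also have "rzero n c (n-2) n n (n-2) = 0" using assms by (intro rzero_off) auto
  also have "RP n (n-2) n n (n-2) = 1" using assms by (auto simp: RP_def)
  also have "ee n (n-2) n = 0" using assms by (auto simp: ee_def)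
  also have "ff n (n-2) n = 0" using assms by (auto simp: ff_def)
  finally show ?thesis by simp
qed

lemma rBD_v4:
  assumes "n \<ge> 3"
  shows "r_BD n c (n-2) n (n-1) (n-2) = 0"
proof -
  have "r_BD n c (n-2) n (n-1) (n-2) = rzero n c (n-2) n (n-1) (n-2) + RP n (n-2) n (n-1) (n-2) + (ee n (n-2) n * ff n (n-1) (n-2) - ff n (n-2) n * ee n (n-1) (n-2))"
    using assms by (intro rBD_eq) auto
  also have "rzero n c (n-2) n (n-1) (n-2) = 0" using assms by (intro rzero_off) auto
  also have "RP n (n-2) n (n-1) (n-2) = 0" using assms by (auto simp: RP_def)
  also have "ee n (n-2) n = 0" using assms by (auto simp: ee_def)
  also have "ff n (n-2) n = 0" using assms by (auto simp: ff_def)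
  finally show ?thesis by simp
qed

definition mu :: "nat \<Rightarrow> 'a::comm_ring_1 tensor \<Rightarrow> 'a mat" where
  "mu N t = mat N N (\<lambda>(i,l). \<Sum>j<N. t i j j l)"

definition cnt :: "nat \<Rightarrow> nat \<Rightarrow> nat" where
  "cnt n i = (if i < n then 2*n-2-i else 2*n-1-i)"

lemma card_cnt:
  assumes "i < 2*n"
  shows "card {j\<in>{..<2*n}. i < j \<and> i + j \<noteq> 2*n-1} = cnt n i"
proof (cases "i < n")
  case True
  then have "{j\<in>{..<2*n}. i < j \<and> i + j \<noteq> 2*n-1} = {i+1..<2*n} - {2*n-1-i}" by auto
  moreover have "2*n-1-i \<in> {i+1..<2*n}" using True by auto
  ultimately show ?thesis using True by (simp add: cnt_def)
next
  case False
  then have "{j\<in>{..<2*n}. i < j \<and> i + j \<noteq> 2*n-1} = {i+1..<2*n}" by auto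
  then show ?thesis using False by (simp add: cnt_def)
qed

lemma sum_rzero_mu:
  fixes c :: "nat \<Rightarrow> nat \<Rightarrow> 'a::field_char_0"
  assumes "admissible_r0 n c" "i < 2*n" "l < 2*n"
  shows "(\<Sum>j<2*n. rzero n c i j j l) = (if i = l then 1/2 else 0)"
proof -
  have "(\<Sum>j<2*n. rzero n c i j j l) = rzero n c i i i l"
    using assms by (intro sum_only) (auto intro: rzero_off)
  also have "\<dots> = (if i = l then 1/2 else 0)"
    using assms by (auto simp: rzero_diag rzero_off)
  finally show ?thesis .
qed

lemma sum_RP_mu:
  assumes "i < 2*n" "l < 2*n"
  shows "(\<Sum>j<2*n. RP n i j j l) = (if i = l then of_nat (cnt n i) else (0::'a::comm_ring_1))"
proof -
  have "(\<Sum>j<2*n. RP n i j j l) = (\<Sum>j<2*n. if i < j \<and> i + j \<noteq> 2*n-1 \<and> l = i then 1 else (0::'a))"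
  proof (rule sum.cong[OF refl])
    fix j assume "j \<in> {..<2*n}"
    then have j: "j < 2*n" by simp
    show "RP n i j j l = (if i < j \<and> i + j \<noteq> 2*n-1 \<and> l = i then 1 else (0::'a))"
    proof (cases "i < j \<and> i + j \<noteq> 2*n-1")
      case True then have "j \<noteq> 2*n-1-i" using assms by linarith
      then show ?thesis using True by (simp add: RP_def)
    next
      case False
      have 1: "RP n i j j l = (0::'a)" unfolding RP_def using False by (rule if_not_P)
      have 2: "\<not> (i < j \<and> i + j \<noteq> 2*n-1 \<and> l = i)" using False by blast
      show ?thesis unfolding 1 if_not_P[OF 2] ..
    qed
  qed
  also have "\<dots> = (if i = l then of_nat (cnt n i) else 0)"
  proof (cases "i = l")
    case True
    have "(\<Sum>j<2*n. if i < j \<and> i + j \<noteq> 2*n-1 \<and> l = i then 1 else (0::'a))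
        = (\<Sum>j\<in>{j\<in>{..<2*n}. i < j \<and> i + j \<noteq> 2*n-1}. 1)"
      using True by (simp add: sum.inter_filter[symmetric])
    also have "\<dots> = of_nat (cnt n i)" using card_cnt[OF assms(1)] by simp
    finally show ?thesis using True by simp
  qed auto
  finally show ?thesis .
qed

lemma ee_zero: "j \<noteq> n-1 \<Longrightarrow> j \<noteq> n+1 \<Longrightarrow> ee n i j = 0"
  by (simp add: ee_def)
lemma ff_zero: "j \<noteq> n-2 \<Longrightarrow> j \<noteq> n-1 \<Longrightarrow> ff n i j = 0"
  by (simp add: ff_def)
lemma ff_nm1: "n \<ge> 3 \<Longrightarrow> ff n (n - Suc 0) l = 0"
  by (auto simp add: ff_def)
lemma ee_nm1: "n \<ge> 3 \<Longrightarrow> ee n (n - Suc 0) l = 0"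
  by (auto simp add: ee_def)

lemma eeff0: "n \<ge> 3 \<Longrightarrow> x \<noteq> n+1 \<Longrightarrow> ee n i x * ff n x l = 0"
  by (cases "x = n-1") (simp_all add: ee_zero ff_nm1)
lemma ffee0: "n \<ge> 3 \<Longrightarrow> x \<noteq> n-2 \<Longrightarrow> ff n i x * ee n x l = 0"
  by (cases "x = n-1") (simp_all add: ff_zero ee_nm1)

lemma sum_W_mu:
  assumes "n \<ge> 3" "i < 2*n" "l < 2*n"
  shows "(\<Sum>j<2*n. ee n i j * ff n j l - ff n i j * ee n j l) = (0::'a::comm_ring_1)"
proof -
  have a: "(\<Sum>j<2*n. ee n i j * ff n j l) = ee n i (n+1) * ff n (n+1) l"
    using assms by (intro sum_only) (auto simp: eeff0)
  have b: "(\<Sum>j<2*n. ff n i j * ee n j l) = ff n i (n-2) * ee n (n-2) l"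
    using assms by (intro sum_only) (auto simp: ffee0)
  have c: "ee n i (n+1) * ff n (n+1) l = (if i = n \<and> l = n-1 then 1 else (0::'a))"
    using assms by (auto simp add: ee_def ff_def)
  have d: "ff n i (n-2) * ee n (n-2) l = (if i = n \<and> l = n-1 then 1 else (0::'a))"
    using assms by (auto simp add: ee_def ff_def)
  show ?thesis unfolding sum_subtractf a b c d by simp
qed

lemma mu_rBD:
  fixes c :: "nat \<Rightarrow> nat \<Rightarrow> 'a::field_char_0"
  assumes "admissible_r0 n c" "n \<ge> 3"
  shows "mu (2*n) (r_BD n c) = mat (2*n) (2*n) (\<lambda>(i,l). if i = l then 1/2 + of_nat (cnt n i) else 0)"
proof (rule eq_matI)
  fix i l assume il: "i < dim_row (mat (2*n) (2*n) (\<lambda>(i,l). if i = l then 1/2 + of_nat (cnt n i) else (0::'a)))"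
    "l < dim_col (mat (2*n) (2*n) (\<lambda>(i,l). if i = l then 1/2 + of_nat (cnt n i) else (0::'a)))"
  then have i: "i < 2*n" "l < 2*n" by auto
  have "(\<Sum>j<2*n. r_BD n c i j j l) = (\<Sum>j<2*n. rzero n c i j j l + RP n i j j l + (ee n i j * ff n j l - ff n i j * ee n j l))"
    apply (rule sum.cong[OF refl]) apply (rule rBD_eq) using assms i by auto
  also have "\<dots> = (\<Sum>j<2*n. rzero n c i j j l) + (\<Sum>j<2*n. RP n i j j l) + (\<Sum>j<2*n. ee n i j * ff n j l - ff n i j * ee n j l)"
    by (simp add: sum.distrib)
  also have "\<dots> = (if i = l then 1/2 + of_nat (cnt n i) else 0)"
    by (simp only: sum_rzero_mu[OF assms(1) i] sum_RP_mu[OF i] sum_W_mu[OF assms(2) i]) simp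
  finally show "mu (2*n) (r_BD n c) $$ (i,l) = mat (2*n) (2*n) (\<lambda>(i,l). if i = l then 1/2 + of_nat (cnt n i) else 0) $$ (i,l)"
    using i by (simp add: mu_def)
qed (simp_all add: mu_def)




lemma mult_idx:
  assumes "A \<in> carrier_mat N N" "B \<in> carrier_mat N N" "i < N" "j < N"
  shows "(A*B)$$(i,j) = (\<Sum>k<N. A$$(i,k)*B$$(k,j))"
  using assms by (simp add: scalar_prod_def atLeast0LessThan)

lemma minv_eq:
  assumes A: "A \<in> carrier_mat N N" and B: "B \<in> carrier_mat N N" and AB: "A*B = 1\<^sub>m N" and BA: "B*A = 1\<^sub>m N"
  shows "minv N A = (B :: 'a::field mat)"
  unfolding minv_def
proof (rule the_equality)
  show "B \<in> carrier_mat N N \<and> A * B = 1\<^sub>m N \<and> B * A = 1\<^sub>m N" using assms by simp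
next
  fix Y assume Y: "Y \<in> carrier_mat N N \<and> A * Y = 1\<^sub>m N \<and> Y * A = 1\<^sub>m N"
  have Yc: "Y \<in> carrier_mat N N" and YA: "Y * A = 1\<^sub>m N" using Y by auto
  have "Y = Y * (A * B)" using Yc AB by simp
  also have "\<dots> = (Y * A) * B" using Yc A B by (simp add: assoc_mult_mat)
  also have "\<dots> = B" using YA B by simp
  finally show "Y = B" .
qed

lemma Smat_carrier[simp]: "Smat n \<in> carrier_mat (2*n) (2*n)"
  by (simp add: Smat_def)
lemma Smat_idx: "i < 2*n \<Longrightarrow> j < 2*n \<Longrightarrow> Smat n $$ (i,j) = (if i + j = 2*n-1 then 1 else 0)"
  by (simp add: Smat_def)

lemma S_mult_left:
  fixes A :: "'a::comm_ring_1 mat"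
  assumes "A \<in> carrier_mat (2*n) (2*n)" "i < 2*n" "j < 2*n"
  shows "(Smat n * A)$$(i,j) = A$$(2*n-1-i, j)"
proof -
  have "(Smat n * A)$$(i,j) = (\<Sum>k<2*n. Smat n $$(i,k)*A$$(k,j))"
    using assms by (intro mult_idx) auto
  also have "\<dots> = Smat n $$(i,2*n-1-i)*A$$(2*n-1-i,j)"
    using assms by (intro sum_only) (auto simp: Smat_idx)
  also have "\<dots> = A$$(2*n-1-i,j)" using assms by (simp add: Smat_idx)
  finally show ?thesis .
qed

lemma S_mult_right:
  fixes A :: "'a::comm_ring_1 mat"
  assumes "A \<in> carrier_mat (2*n) (2*n)" "i < 2*n" "j < 2*n"
  shows "(A * Smat n)$$(i,j) = A$$(i, 2*n-1-j)"
proof -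
  have "(A * Smat n)$$(i,j) = (\<Sum>k<2*n. A$$(i,k) * Smat n $$(k,j))"
    using assms by (intro mult_idx) auto
  also have "\<dots> = A$$(i,2*n-1-j) * Smat n $$(2*n-1-j,j)"
    using assms by (intro sum_only) (auto simp: Smat_idx)
  also have "\<dots> = A$$(i,2*n-1-j)" using assms by (simp add: Smat_idx)
  finally show ?thesis .
qed

lemma SS: "Smat n * Smat n = (1\<^sub>m (2*n) :: 'a::comm_ring_1 mat)"
proof (rule eq_matI)
  fix i j assume "i < dim_row (1\<^sub>m (2*n) :: 'a mat)" "j < dim_col (1\<^sub>m (2*n) :: 'a mat)"
  then have ij: "i < 2*n" "j < 2*n" by auto
  show "(Smat n * Smat n) $$ (i,j) = (1\<^sub>m (2*n) :: 'a mat) $$ (i,j)"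
    using ij by (auto simp add: S_mult_left Smat_idx)
qed (auto simp: Smat_def)

lemma orth_entry:
  fixes M :: "'a::comm_ring_1 mat"
  assumes "M \<in> carrier_mat (2*n) (2*n)" "i < 2*n" "k < 2*n"
  shows "(transpose_mat M * Smat n * M)$$(i,k) = (\<Sum>q<2*n. M$$(2*n-1-q, i) * M$$(q,k))"
proof -
  have "(transpose_mat M * Smat n * M)$$(i,k) = (\<Sum>q<2*n. (transpose_mat M * Smat n)$$(i,q) * M$$(q,k))"
    using assms by (intro mult_idx) auto
  also have "\<dots> = (\<Sum>q<2*n. M$$(2*n-1-q, i) * M$$(q,k))"
    using assms by (intro sum.cong) (auto simp: S_mult_right)
  finally show ?thesis .
qed

lemma orth_inv:
  fixes M :: "'a::field mat"
  assumes "M \<in> orth_grp n"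
  defines "Y \<equiv> Smat n * transpose_mat M * Smat n"
  shows "Y \<in> carrier_mat (2*n) (2*n)" "Y * M = 1\<^sub>m (2*n)" "M * Y = 1\<^sub>m (2*n)" "minv (2*n) M = Y"
    "\<And>q j. q < 2*n \<Longrightarrow> j < 2*n \<Longrightarrow> Y$$(q,j) = M$$(2*n-1-j, 2*n-1-q)"
proof -
  have M: "M \<in> carrier_mat (2*n) (2*n)" and O: "transpose_mat M * Smat n * M = Smat n"
    using assms(1) by (auto simp: orth_grp_def)
  have Mt: "transpose_mat M \<in> carrier_mat (2*n) (2*n)" using M by simp
  have S: "Smat n \<in> carrier_mat (2*n) (2*n)" by simp
  show Yc: "Y \<in> carrier_mat (2*n) (2*n)" unfolding Y_def using M S by (intro mult_carrier_mat) auto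
  have "Y * M = (Smat n * transpose_mat M) * (Smat n * M)"
    unfolding Y_def using M Mt S mult_carrier_mat[OF S Mt]
    by (intro assoc_mult_mat[of "Smat n * transpose_mat M" "2*n" "2*n" "Smat n" "2*n" M "2*n"]) auto
  also have "\<dots> = Smat n * (transpose_mat M * (Smat n * M))"
    using assoc_mult_mat[OF S Mt mult_carrier_mat[OF S M]] .
  also have "transpose_mat M * (Smat n * M) = Smat n"
    using O assoc_mult_mat[OF Mt S M] by simp
  finally show YM: "Y * M = 1\<^sub>m (2*n)" by (simp add: SS)
  show MY: "M * Y = 1\<^sub>m (2*n)" using mat_mult_left_right_inverse[OF Yc M YM] .
  show "minv (2*n) M = Y" using minv_eq[OF M Yc MY YM] .
  fix q j assume qj: "q < 2*n" "j < 2*n"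
  have "Y$$(q,j) = (Smat n * transpose_mat M)$$(q, 2*n-1-j)"
    unfolding Y_def using qj M mult_carrier_mat[OF S Mt] by (intro S_mult_right) auto
  also have "\<dots> = transpose_mat M $$ (2*n-1-q, 2*n-1-j)"
    using qj M by (intro S_mult_left) auto
  also have "\<dots> = M$$(2*n-1-j, 2*n-1-q)" using qj M by simp
  finally show "Y$$(q,j) = M$$(2*n-1-j, 2*n-1-q)" .
qed


lemma swap5:
  "(\<Sum>j\<in>A. \<Sum>p\<in>B. \<Sum>q\<in>C. \<Sum>s\<in>D. \<Sum>u\<in>E. f j p q s u) =
   (\<Sum>p\<in>B. \<Sum>q\<in>C. \<Sum>s\<in>D. \<Sum>u\<in>E. \<Sum>j\<in>A. (f j p q s u :: 'a::comm_monoid_add))"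
proof -
  have "(\<Sum>j\<in>A. \<Sum>p\<in>B. \<Sum>q\<in>C. \<Sum>s\<in>D. \<Sum>u\<in>E. f j p q s u) =
        (\<Sum>p\<in>B. \<Sum>j\<in>A. \<Sum>q\<in>C. \<Sum>s\<in>D. \<Sum>u\<in>E. f j p q s u)" by (rule sum.swap)
  also have "\<dots> = (\<Sum>p\<in>B. \<Sum>q\<in>C. \<Sum>j\<in>A. \<Sum>s\<in>D. \<Sum>u\<in>E. f j p q s u)"
    by (rule sum.cong[OF refl], rule sum.swap)
  also have "\<dots> = (\<Sum>p\<in>B. \<Sum>q\<in>C. \<Sum>s\<in>D. \<Sum>j\<in>A. \<Sum>u\<in>E. f j p q s u)"
    by (rule sum.cong[OF refl], rule sum.cong[OF refl], rule sum.swap)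
  also have "\<dots> = (\<Sum>p\<in>B. \<Sum>q\<in>C. \<Sum>s\<in>D. \<Sum>u\<in>E. \<Sum>j\<in>A. f j p q s u)"
    by (rule sum.cong[OF refl], rule sum.cong[OF refl], rule sum.cong[OF refl], rule sum.swap)
  finally show ?thesis .
qed

lemma mu_AdAd:
  fixes M Y :: "'a::field mat"
  assumes M: "M \<in> carrier_mat N N" and Y: "Y \<in> carrier_mat N N" and YM: "Y * M = 1\<^sub>m N"
    and inv: "minv N M = Y"
  shows "mu N (AdAd N M t) = M * mu N t * Y"
proof (rule eq_matI)
  fix i l assume "i < dim_row (M * mu N t * Y)" "l < dim_col (M * mu N t * Y)"
  then have il: "i < N" "l < N" using M Y by auto
  have mu_c: "mu N t \<in> carrier_mat N N" by (simp add: mu_def)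
  have "mu N (AdAd N M t) $$ (i,l) = (\<Sum>j<N. \<Sum>p<N. \<Sum>q<N. \<Sum>s<N. \<Sum>u<N.
           M $$ (i,p) * t p q s u * Y $$ (q,j) * M $$ (j,s) * Y $$ (u,l))"
    unfolding mu_def AdAd_def Let_def inv using il by simp
  also have "\<dots> = (\<Sum>p<N. \<Sum>q<N. \<Sum>s<N. \<Sum>u<N. \<Sum>j<N.
           M $$ (i,p) * t p q s u * Y $$ (q,j) * M $$ (j,s) * Y $$ (u,l))"
    by (rule swap5)
  also have "\<dots> = (\<Sum>p<N. \<Sum>q<N. \<Sum>s<N. \<Sum>u<N.
           (M $$ (i,p) * t p q s u * Y $$ (u,l)) * (\<Sum>j<N. Y $$ (q,j) * M $$ (j,s)))"
    by (simp add: sum_distrib_left mult_ac)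
  also have "\<dots> = (\<Sum>p<N. \<Sum>q<N. \<Sum>s<N. \<Sum>u<N.
           (M $$ (i,p) * t p q s u * Y $$ (u,l)) * (if q = s then 1 else 0))"
  proof -
    have "\<And>q s. q < N \<Longrightarrow> s < N \<Longrightarrow> (\<Sum>j<N. Y $$ (q,j) * M $$ (j,s)) = (if q = s then 1 else 0)"
      using mult_idx[OF Y M] YM by (metis index_one_mat(1))
    then show ?thesis by (intro sum.cong refl) auto
  qed
  also have "\<dots> = (\<Sum>p<N. \<Sum>q<N. \<Sum>u<N. M $$ (i,p) * t p q q u * Y $$ (u,l))"
    apply (rule sum.cong[OF refl], rule sum.cong[OF refl])
    subgoal for p q by (subst sum_only[where a=q]) auto
    done
  also have "\<dots> = (\<Sum>p<N. \<Sum>u<N. \<Sum>q<N. M $$ (i,p) * t p q q u * Y $$ (u,l))"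
    by (rule sum.cong[OF refl], rule sum.swap)
  also have "\<dots> = (\<Sum>u<N. \<Sum>p<N. \<Sum>q<N. M $$ (i,p) * t p q q u * Y $$ (u,l))"
    by (rule sum.swap)
  also have "\<dots> = (\<Sum>u<N. (\<Sum>p<N. M $$ (i,p) * (\<Sum>q<N. t p q q u)) * Y $$ (u,l))"
    by (simp add: sum_distrib_left sum_distrib_right mult_ac)
  also have "\<dots> = (\<Sum>u<N. (M * mu N t) $$ (i,u) * Y $$ (u,l))"
  proof (intro sum.cong refl)
    fix u assume "u \<in> {..<N}"
    then have "(M * mu N t) $$ (i,u) = (\<Sum>p<N. M $$ (i,p) * mu N t $$ (p,u))"
      using il by (intro mult_idx[OF M mu_c]) auto
    also have "\<dots> = (\<Sum>p<N. M $$ (i,p) * (\<Sum>q<N. t p q q u))"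
      using \<open>u \<in> {..<N}\<close> by (intro sum.cong refl) (auto simp: mu_def)
    finally show "(\<Sum>p<N. M $$ (i,p) * (\<Sum>q<N. t p q q u)) * Y $$ (u,l) = (M * mu N t) $$ (i,u) * Y $$ (u,l)"
      by simp
  qed
  also have "\<dots> = (M * mu N t * Y) $$ (i,l)"
    using il M mu_c Y by (intro mult_idx[symmetric]) auto
  finally show "mu N (AdAd N M t) $$ (i,l) = (M * mu N t * Y) $$ (i,l)" .
qed (use M Y in \<open>auto simp: mu_def\<close>)


lemma sum4_reduce:
  fixes A B C E :: "nat \<Rightarrow> 'a::comm_ring_1"
  assumes "\<forall>p<N. p \<noteq> p0 \<longrightarrow> A p = 0" "\<forall>q<N. q \<noteq> q1 \<and> q \<noteq> q2 \<longrightarrow> B q = 0"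
    "\<forall>s<N. s \<noteq> s1 \<and> s \<noteq> s2 \<longrightarrow> C s = 0" "\<forall>u<N. u \<noteq> u0 \<longrightarrow> E u = 0"
    "p0 < N" "q1 < N" "q2 < N" "q1 \<noteq> q2" "s1 < N" "s2 < N" "s1 \<noteq> s2" "u0 < N"
  shows "(\<Sum>p<N. \<Sum>q<N. \<Sum>s<N. \<Sum>u<N. A p * t p q s u * B q * C s * E u) =
    A p0 * E u0 * (t p0 q1 s1 u0 * B q1 * C s1 + t p0 q1 s2 u0 * B q1 * C s2
                 + t p0 q2 s1 u0 * B q2 * C s1 + t p0 q2 s2 u0 * B q2 * C s2)"
proof -
  have inner: "\<And>q s. (\<Sum>u<N. A p0 * t p0 q s u * B q * C s * E u) = A p0 * t p0 q s u0 * B q * C s * E u0"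
    using assms by (intro sum_only) auto
  have mid: "\<And>q. (\<Sum>s<N. \<Sum>u<N. A p0 * t p0 q s u * B q * C s * E u) =
      A p0 * t p0 q s1 u0 * B q * C s1 * E u0 + A p0 * t p0 q s2 u0 * B q * C s2 * E u0"
    unfolding inner using assms by (intro sum_only2) auto
  have "(\<Sum>p<N. \<Sum>q<N. \<Sum>s<N. \<Sum>u<N. A p * t p q s u * B q * C s * E u) =
        (\<Sum>q<N. \<Sum>s<N. \<Sum>u<N. A p0 * t p0 q s u * B q * C s * E u)"
    using assms by (intro sum_only) auto
  also have "\<dots> = (\<Sum>q<N. A p0 * t p0 q s1 u0 * B q * C s1 * E u0 + A p0 * t p0 q s2 u0 * B q * C s2 * E u0)"
    unfolding mid ..
  also have "\<dots> = (A p0 * t p0 q1 s1 u0 * B q1 * C s1 * E u0 + A p0 * t p0 q1 s2 u0 * B q1 * C s2 * E u0)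
     + (A p0 * t p0 q2 s1 u0 * B q2 * C s1 * E u0 + A p0 * t p0 q2 s2 u0 * B q2 * C s2 * E u0)"
    using assms by (intro sum_only2) auto
  finally show ?thesis by (simp add: algebra_simps)
qed

lemma cnt_eq:
  assumes "i < 2*n" "k < 2*n" "cnt n i = cnt n k" "i \<noteq> k"
  shows "(i = n-1 \<and> k = n) \<or> (i = n \<and> k = n-1)"
proof (cases "i < n")
  case True
  show ?thesis
  proof (cases "k < n")
    case True
    then show ?thesis using \<open>i < n\<close> assms unfolding cnt_def by simp
  next
    case False
    then have "2*n-2-i = 2*n-1-k" using \<open>i < n\<close> assms unfolding cnt_def by simp
    then show ?thesis using \<open>i < n\<close> False assms by linarith
  qed
next
  case False
  show ?thesis
  proof (cases "k < n")
    case True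
    then have "2*n-1-i = 2*n-2-k" using \<open>\<not> i < n\<close> assms unfolding cnt_def by simp
    then show ?thesis using \<open>\<not> i < n\<close> True assms by linarith
  next
    case False
    then show ?thesis using \<open>\<not> i < n\<close> assms unfolding cnt_def by simp
  qed
qed

lemma block_sparse:
  fixes c :: "nat \<Rightarrow> nat \<Rightarrow> 'a::field_char_0"
  assumes n3: "n \<ge> 3" and adm: "admissible_r0 n c" and M: "M \<in> orth_grp n"
    and fx: "AdAd (2*n) M (r_BD n c) = r_BD n c"
  shows "\<forall>i<2*n. \<forall>k<2*n. M$$(i,k) \<noteq> 0 \<longrightarrow> i = k \<or> (i = n-1 \<and> k = n) \<or> (i = n \<and> k = n-1)"
proof (intro allI impI)
  fix i k assume ik: "i < 2*n" "k < 2*n" and nz: "M$$(i,k) \<noteq> 0"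
  define Y where "Y = Smat n * transpose_mat M * Smat n"
  note Yp = orth_inv[OF M, folded Y_def]
  have Mc: "M \<in> carrier_mat (2*n) (2*n)" using M by (simp add: orth_grp_def)
  define Dm where "Dm = mat (2*n) (2*n) (\<lambda>(i,l). if i = l then 1/2 + of_nat (cnt n i) else (0::'a))"
  have Dc: "Dm \<in> carrier_mat (2*n) (2*n)" by (simp add: Dm_def)
  have "Dm = M * Dm * Y"
    using mu_AdAd[OF Mc Yp(1) Yp(2) Yp(4), of "r_BD n c"] mu_rBD[OF adm n3] fx by (simp add: Dm_def)
  then have "Dm * M = (M * Dm) * (Y * M)"
    using assoc_mult_mat[OF mult_carrier_mat[OF Mc Dc] Yp(1) Mc] by simp
  also have "\<dots> = M * Dm" using Yp(2) right_mult_one_mat[OF mult_carrier_mat[OF Mc Dc]] by simp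
  finally have DM: "Dm * M = M * Dm" .
  have "(Dm * M)$$(i,k) = (\<Sum>j<2*n. Dm$$(i,j) * M$$(j,k))" using ik by (intro mult_idx[OF Dc Mc])
  also have "\<dots> = Dm$$(i,i) * M$$(i,k)" using ik by (intro sum_only) (auto simp: Dm_def)
  finally have 1: "(Dm * M)$$(i,k) = (1/2 + of_nat (cnt n i)) * M$$(i,k)" using ik by (simp add: Dm_def)
  have "(M * Dm)$$(i,k) = (\<Sum>j<2*n. M$$(i,j) * Dm$$(j,k))" using ik by (intro mult_idx[OF Mc Dc])
  also have "\<dots> = M$$(i,k) * Dm$$(k,k)" using ik by (intro sum_only) (auto simp: Dm_def)
  finally have 2: "(M * Dm)$$(i,k) = M$$(i,k) * (1/2 + of_nat (cnt n k))" using ik by (simp add: Dm_def)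
  from DM have "(Dm * M)$$(i,k) = (M * Dm)$$(i,k)" by simp
  then have "(1/2 + of_nat (cnt n i)) * M$$(i,k) = M$$(i,k) * (1/2 + of_nat (cnt n k))"
    unfolding 1 2 .
  then have "M$$(i,k) = 0 \<or> cnt n k = cnt n i" by (simp add: algebra_simps) (metis eq_commute)
  then have "cnt n i = cnt n k" using nz by auto
  then show "i = k \<or> (i = n-1 \<and> k = n) \<or> (i = n \<and> k = n-1)"
    using cnt_eq[OF ik] by blast
qed


lemma block_alg:
  fixes a b c d :: "'a::field_char_0"
  assumes O1: "c*a + a*c = 0" and O2: "d*b + b*d = 0" and O3: "c*b + a*d = 1" and E: "d*c + d*d + c*d = 1"
  shows "b = 0 \<and> c = 0 \<and> a = d \<and> (d = 1 \<or> d = -1)"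
proof -
  have ac: "a*c = 0" using O1 by (simp add: mult.commute)
  have bd: "b*d = 0" using O2 by (simp add: mult.commute)
  have a0: "a \<noteq> 0"
  proof
    assume "a = 0"
    then have "c*b = 1" using O3 by simp
    then have "b \<noteq> 0" by auto
    then have "d = 0" using bd by simp
    then show False using E by simp
  qed
  then have c0: "c = 0" using ac by simp
  then have ad: "a*d = 1" using O3 by simp
  then have "d \<noteq> 0" by auto
  then have b0: "b = 0" using bd by simp
  have dd: "d*d = 1" using E c0 by simp
  have "a = a*(d*d)" using dd by simp
  also have "\<dots> = (a*d)*d" by (simp add: mult.assoc)
  finally have "a = d" using ad by simp
  moreover have "d = 1 \<or> d = -1"
  proof -
    have "(d - 1) * (d + 1) = 0" using dd by (simp add: algebra_simps)
    then show ?thesis by (auto simp: eq_neg_iff_add_eq_0)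
  qed
  ultimately show ?thesis using b0 c0 by simp
qed

lemma sub_dir:
  fixes c :: "nat \<Rightarrow> nat \<Rightarrow> 'a::field_char_0"
  assumes n3: "n \<ge> 3" and adm: "admissible_r0 n c" and M: "M \<in> orth_grp n"
    and fx: "AdAd (2*n) M (r_BD n c) = r_BD n c"
  shows "\<exists>t \<eta>. M = Tdiag n t \<eta> \<and> (\<forall>i<n-1. t i \<noteq> 0) \<and> (\<eta> = 1 \<or> \<eta> = -1)"
proof -
  have sp: "\<And>i k. i<2*n \<Longrightarrow> k<2*n \<Longrightarrow> M$$(i,k) \<noteq> 0 \<Longrightarrow> i = k \<or> (i = n-1 \<and> k = n) \<or> (i = n \<and> k = n-1)"
    using block_sparse[OF n3 adm M fx] by blast
  have Mc: "M \<in> carrier_mat (2*n) (2*n)" and O: "transpose_mat M * Smat n * M = Smat n"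
    using M by (auto simp: orth_grp_def)
  have Oe: "(\<Sum>q<2*n. M$$(2*n-1-q,i) * M$$(q,k)) = (if i+k = 2*n-1 then 1 else 0)" if ik: "i<2*n" "k<2*n" for i k
  proof -
    have "(\<Sum>q<2*n. M$$(2*n-1-q,i) * M$$(q,k)) = (transpose_mat M * Smat n * M)$$(i,k)"
      using orth_entry[OF Mc ik] by simp
    also have "\<dots> = Smat n $$ (i,k)" using O by simp
    also have "\<dots> = (if i+k = 2*n-1 then 1 else 0)" using Smat_idx[OF ik] .
    finally show ?thesis .
  qed
  have h1: "2*n-1-(n-1) = n" "2*n-1-n = n-1" "2*n-1-(n-2) = n+1" "2*n-1-(n+1) = n-2" using n3 by auto
  have b1: "n-1 < 2*n" "n < 2*n" "n-2 < 2*n" "n+1 < 2*n" "n-1 \<noteq> n" using n3 by auto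
  have O1: "M$$(n,n-1) * M$$(n-1,n-1) + M$$(n-1,n-1) * M$$(n,n-1) = 0"
  proof -
    have "(\<Sum>q<2*n. M$$(2*n-1-q,n-1) * M$$(q,n-1)) = M$$(2*n-1-(n-1),n-1) * M$$(n-1,n-1) + M$$(2*n-1-n,n-1) * M$$(n,n-1)"
      using b1 by (intro sum_only2) (auto dest: sp[of _ "n-1"])
    moreover have "(\<Sum>q<2*n. M$$(2*n-1-q,n-1) * M$$(q,n-1)) = 0" using Oe[of "n-1" "n-1"] b1 n3 by simp
    ultimately show ?thesis unfolding h1 by simp
  qed
  have O2: "M$$(n,n) * M$$(n-1,n) + M$$(n-1,n) * M$$(n,n) = 0"
  proof -
    have "(\<Sum>q<2*n. M$$(2*n-1-q,n) * M$$(q,n)) = M$$(2*n-1-(n-1),n) * M$$(n-1,n) + M$$(2*n-1-n,n) * M$$(n,n)"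
      using b1 by (intro sum_only2) (auto dest: sp[of _ "n"])
    moreover have "(\<Sum>q<2*n. M$$(2*n-1-q,n) * M$$(q,n)) = 0" using Oe[of "n" "n"] b1 n3 by simp
    ultimately show ?thesis unfolding h1 by simp
  qed
  have O3: "M$$(n,n-1) * M$$(n-1,n) + M$$(n-1,n-1) * M$$(n,n) = 1"
  proof -
    have "(\<Sum>q<2*n. M$$(2*n-1-q,n-1) * M$$(q,n)) = M$$(2*n-1-(n-1),n-1) * M$$(n-1,n) + M$$(2*n-1-n,n-1) * M$$(n,n)"
      using b1 by (intro sum_only2) (auto dest: sp[of _ "n"])
    moreover have "(\<Sum>q<2*n. M$$(2*n-1-q,n-1) * M$$(q,n)) = 1" using Oe[of "n-1" "n"] b1 n3 by simp
    ultimately show ?thesis unfolding h1 by simp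
  qed
  have O4: "\<And>i. i < 2*n \<Longrightarrow> i \<noteq> n-1 \<Longrightarrow> i \<noteq> n \<Longrightarrow> M$$(i,i) * M$$(2*n-1-i,2*n-1-i) = 1"
  proof -
    fix i assume i: "i < 2*n" "i \<noteq> n-1" "i \<noteq> n"
    have "(\<Sum>q<2*n. M$$(2*n-1-q,i) * M$$(q,2*n-1-i)) = M$$(2*n-1-(2*n-1-i),i) * M$$(2*n-1-i,2*n-1-i)"
    proof (rule sum_only)
      fix q assume q: "q \<in> {..<2*n}" "q \<noteq> 2*n-1-i"
      have "M$$(2*n-1-q,i) = 0"
      proof (rule ccontr)
        assume "M$$(2*n-1-q,i) \<noteq> 0"
        from sp[OF _ _ this] q i show False by auto
      qed
      then show "M$$(2*n-1-q,i) * M$$(q,2*n-1-i) = 0" by simp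
    qed (use i in auto)
    moreover have "(\<Sum>q<2*n. M$$(2*n-1-q,i) * M$$(q,2*n-1-i)) = 1" using Oe[of i "2*n-1-i"] i by simp
    moreover have "2*n-1-(2*n-1-i) = i" using i by auto
    ultimately show "M$$(i,i) * M$$(2*n-1-i,2*n-1-i) = 1" by simp
  qed
  define Y where "Y = Smat n * transpose_mat M * Smat n"
  note Yp = orth_inv[OF M, folded Y_def]
  have E0: "AdAd (2*n) M (r_BD n c) (n-2) (n-1) n (n-2) = 1"
    using fx rBD_v2[OF n3] by simp
  have "AdAd (2*n) M (r_BD n c) (n-2) (n-1) n (n-2) =
     (\<Sum>p<2*n. \<Sum>q<2*n. \<Sum>s<2*n. \<Sum>u<2*n.
           M $$ (n-2,p) * r_BD n c p q s u * Y $$ (q,n-1) * M $$ (n,s) * Y $$ (u,n-2))"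
    unfolding AdAd_def Let_def Yp(4) using b1 by simp
  also have "\<dots> = M$$(n-2,n-2) * Y$$(n-2,n-2) *
     (r_BD n c (n-2) (n-1) (n-1) (n-2) * Y$$(n-1,n-1) * M$$(n,n-1) + r_BD n c (n-2) (n-1) n (n-2) * Y$$(n-1,n-1) * M$$(n,n)
    + r_BD n c (n-2) n (n-1) (n-2) * Y$$(n,n-1) * M$$(n,n-1) + r_BD n c (n-2) n n (n-2) * Y$$(n,n-1) * M$$(n,n))"
  proof (rule sum4_reduce[where A="\<lambda>p. M$$(n-2,p)" and B="\<lambda>q. Y$$(q,n-1)" and C="\<lambda>s. M$$(n,s)" and E="\<lambda>u. Y$$(u,n-2)"])
    show "\<forall>p<2*n. p \<noteq> n-2 \<longrightarrow> M$$(n-2,p) = 0"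
    proof (intro allI impI, rule ccontr)
      fix p assume "p < 2*n" "p \<noteq> n-2" "M$$(n-2,p) \<noteq> 0"
      from sp[OF b1(3) this(1) this(3)] this(2) n3 show False by auto
    qed
    show "\<forall>q<2*n. q \<noteq> n-1 \<and> q \<noteq> n \<longrightarrow> Y$$(q,n-1) = 0"
    proof (intro allI impI, rule ccontr)
      fix q assume q: "q < 2*n" "q \<noteq> n-1 \<and> q \<noteq> n" "Y$$(q,n-1) \<noteq> 0"
      then have "M$$(n, 2*n-1-q) \<noteq> 0" using Yp(5)[of q "n-1"] h1 b1 by simp
      from sp[OF _ _ this] q n3 show False by auto
    qed
    show "\<forall>s<2*n. s \<noteq> n-1 \<and> s \<noteq> n \<longrightarrow> M$$(n,s) = 0"
    proof (intro allI impI, rule ccontr)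
      fix s assume "s < 2*n" "s \<noteq> n-1 \<and> s \<noteq> n" "M$$(n,s) \<noteq> 0"
      from sp[OF b1(2) this(1) this(3)] this(2) n3 show False by auto
    qed
    show "\<forall>u<2*n. u \<noteq> n-2 \<longrightarrow> Y$$(u,n-2) = 0"
    proof (intro allI impI, rule ccontr)
      fix u assume u: "u < 2*n" "u \<noteq> n-2" "Y$$(u,n-2) \<noteq> 0"
      then have "M$$(n+1, 2*n-1-u) \<noteq> 0" using Yp(5)[of u "n-2"] h1 b1 by simp
      from sp[OF _ _ this] u n3 show False by auto
    qed
  qed (use b1 in auto)
  finally have E1: "M$$(n-2,n-2) * Y$$(n-2,n-2) *
     (r_BD n c (n-2) (n-1) (n-1) (n-2) * Y$$(n-1,n-1) * M$$(n,n-1) + r_BD n c (n-2) (n-1) n (n-2) * Y$$(n-1,n-1) * M$$(n,n)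
    + r_BD n c (n-2) n (n-1) (n-2) * Y$$(n,n-1) * M$$(n,n-1) + r_BD n c (n-2) n n (n-2) * Y$$(n,n-1) * M$$(n,n)) = 1"
    using E0 by simp
  have Yv: "Y$$(n-2,n-2) = M$$(n+1,n+1)" "Y$$(n-1,n-1) = M$$(n,n)" "Y$$(n,n-1) = M$$(n,n-1)"
    using Yp(5) h1 b1 by auto
  have mm: "M$$(n-2,n-2) * M$$(n+1,n+1) = 1" using O4[of "n-2"] h1 b1 n3 by auto
  have E2: "M$$(n,n) * M$$(n,n-1) + M$$(n,n) * M$$(n,n) + M$$(n,n-1) * M$$(n,n) = 1"
    using E1 unfolding Yv rBD_v1[OF n3] rBD_v2[OF n3] rBD_v3[OF n3] rBD_v4[OF n3] mm by simp
  have BA: "M$$(n-1,n) = 0 \<and> M$$(n,n-1) = 0 \<and> M$$(n-1,n-1) = M$$(n,n) \<and> (M$$(n,n) = 1 \<or> M$$(n,n) = -1)"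
    by (rule block_alg[OF O1 O2 O3 E2])
  define t where "t i = M$$(i,i)" for i
  define \<eta> where "\<eta> = M$$(n,n)"
  have "M = Tdiag n t \<eta>"
  proof (rule eq_matI)
    fix i k assume "i < dim_row (Tdiag n t \<eta>)" "k < dim_col (Tdiag n t \<eta>)"
    then have ik: "i < 2*n" "k < 2*n" by (auto simp: Tdiag_def)
    have T: "Tdiag n t \<eta> $$ (i,k) = (if i \<noteq> k then 0 else if i < n - 1 then t i
      else if i = n - 1 \<or> i = n then \<eta> else inverse (t (mir n i)))"
      using ik by (simp add: Tdiag_def)
    show "M $$ (i,k) = Tdiag n t \<eta> $$ (i,k)"
    proof (cases "i = k")
      case False
      have "M$$(i,k) = 0"
      proof (rule ccontr)
        assume "M$$(i,k) \<noteq> 0"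
        from sp[OF ik this] False have "(i = n-1 \<and> k = n) \<or> (i = n \<and> k = n-1)" by simp
        then show False using BA \<open>M$$(i,k) \<noteq> 0\<close> by auto
      qed
      then show ?thesis using T False by simp
    next
      case True
      show ?thesis
      proof (cases "i < n-1")
        case True
        then show ?thesis using T \<open>i = k\<close> by (simp add: t_def)
      next
        case False
        show ?thesis
        proof (cases "i = n-1 \<or> i = n")
          case True
          then show ?thesis using T \<open>i = k\<close> False BA by (auto simp: \<eta>_def)
        next
          case False2: False
          have "M$$(i,i) * M$$(2*n-1-i,2*n-1-i) = 1" using O4[OF ik(1)] False2 by auto
          then have "M$$(i,i) = inverse (M$$(2*n-1-i,2*n-1-i))" by (metis inverse_unique mult.commute)
          then show ?thesis using T \<open>i = k\<close> False False2 by (simp add: t_def mir_def)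
        qed
      qed
    qed
  qed (auto simp: Tdiag_def Mc[THEN carrier_matD(1)] Mc[THEN carrier_matD(2)])
  moreover have "\<forall>i<n-1. t i \<noteq> 0"
  proof (intro allI impI)
    fix i assume "i < n-1"
    then have "M$$(i,i) * M$$(2*n-1-i,2*n-1-i) = 1" using O4[of i] by auto
    then show "t i \<noteq> 0" unfolding t_def by auto
  qed
  moreover have "\<eta> = 1 \<or> \<eta> = -1" using BA by (simp add: \<eta>_def)
  ultimately show ?thesis by blast
qed




definition DG :: "nat \<Rightarrow> (nat \<Rightarrow> 'a::field) \<Rightarrow> 'a mat" where
  "DG N d = mat N N (\<lambda>(i,j). if i = j then d i else 0)"

lemma DG_carrier[simp]: "DG N d \<in> carrier_mat N N" by (simp add: DG_def)
lemma DG_idx: "i < N \<Longrightarrow> j < N \<Longrightarrow> DG N d $$ (i,j) = (if i = j then d i else 0)"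
  by (simp add: DG_def)

lemma DG_mult: "DG N d * DG N e = DG N (\<lambda>i. d i * e i)"
proof (rule eq_matI)
  fix i j assume "i < dim_row (DG N (\<lambda>i. d i * e i))" "j < dim_col (DG N (\<lambda>i. d i * e i))"
  then have ij: "i < N" "j < N" by (auto simp: DG_def)
  have "(DG N d * DG N e) $$ (i,j) = (\<Sum>k<N. DG N d $$ (i,k) * DG N e $$ (k,j))"
    using ij by (intro mult_idx) auto
  also have "\<dots> = DG N d $$ (i,i) * DG N e $$ (i,j)"
    using ij by (intro sum_only) (auto simp: DG_idx)
  finally show "(DG N d * DG N e) $$ (i,j) = DG N (\<lambda>i. d i * e i) $$ (i,j)"
    using ij by (simp add: DG_idx)
qed (auto simp: DG_def)

lemma DG_one: "(\<forall>i<N. f i = 1) \<Longrightarrow> DG N f = 1\<^sub>m N"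
  by (rule eq_matI) (auto simp: DG_def)

lemma minv_DG:
  assumes "\<forall>i<N. d i \<noteq> 0"
  shows "minv N (DG N d) = DG N (\<lambda>i. inverse (d i))"
proof (rule minv_eq)
  show "DG N d * DG N (\<lambda>i. inverse (d i)) = 1\<^sub>m N" unfolding DG_mult using assms by (intro DG_one) auto
  show "DG N (\<lambda>i. inverse (d i)) * DG N d = 1\<^sub>m N" unfolding DG_mult using assms by (intro DG_one) auto
qed auto

lemma AdAd_DG:
  assumes "\<forall>i<N. d i \<noteq> 0" "i < N" "j < N" "k < N" "l < N"
  shows "AdAd N (DG N d) t i j k l = d i * t i j k l * inverse (d j) * d k * inverse (d l)"
proof -
  have "AdAd N (DG N d) t i j k l = (\<Sum>p<N. \<Sum>q<N. \<Sum>s<N. \<Sum>u<N.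
           DG N d $$ (i,p) * t p q s u * DG N (\<lambda>i. inverse (d i)) $$ (q,j) * DG N d $$ (k,s) * DG N (\<lambda>i. inverse (d i)) $$ (u,l))"
    unfolding AdAd_def Let_def minv_DG[OF assms(1)] using assms by simp
  also have "\<dots> = (\<Sum>q<N. \<Sum>s<N. \<Sum>u<N.
           DG N d $$ (i,i) * t i q s u * DG N (\<lambda>i. inverse (d i)) $$ (q,j) * DG N d $$ (k,s) * DG N (\<lambda>i. inverse (d i)) $$ (u,l))"
    using assms by (intro sum_only) (auto simp: DG_idx)
  also have "\<dots> = (\<Sum>s<N. \<Sum>u<N.
           DG N d $$ (i,i) * t i j s u * DG N (\<lambda>i. inverse (d i)) $$ (j,j) * DG N d $$ (k,s) * DG N (\<lambda>i. inverse (d i)) $$ (u,l))"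
    using assms by (intro sum_only) (auto simp: DG_idx)
  also have "\<dots> = (\<Sum>u<N.
           DG N d $$ (i,i) * t i j k u * DG N (\<lambda>i. inverse (d i)) $$ (j,j) * DG N d $$ (k,k) * DG N (\<lambda>i. inverse (d i)) $$ (u,l))"
    using assms by (intro sum_only) (auto simp: DG_idx)
  also have "\<dots> = DG N d $$ (i,i) * t i j k l * DG N (\<lambda>i. inverse (d i)) $$ (j,j) * DG N d $$ (k,k) * DG N (\<lambda>i. inverse (d i)) $$ (l,l)"
    using assms by (intro sum_only) (auto simp: DG_idx)
  finally show ?thesis using assms by (simp add: DG_idx)
qed

lemma AdAd_out:
  assumes "\<not> (i < N \<and> j < N \<and> k < N \<and> l < N)"
  shows "AdAd N M t i j k l = 0"
  using assms by (auto simp: AdAd_def Let_def)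

lemma DG_orth:
  assumes "\<forall>i<2*n. d (2*n-1-i) * d i = 1"
  shows "DG (2*n) d \<in> orth_grp n"
proof -
  have "transpose_mat (DG (2*n) d) * Smat n * DG (2*n) d = Smat n"
  proof (rule eq_matI)
    fix i k assume "i < dim_row (Smat n :: 'a mat)" "k < dim_col (Smat n :: 'a mat)"
    then have ik: "i < 2*n" "k < 2*n" by (auto simp: Smat_def)
    have "(transpose_mat (DG (2*n) d) * Smat n * DG (2*n) d)$$(i,k) = (\<Sum>q<2*n. DG (2*n) d $$(2*n-1-q, i) * DG (2*n) d $$(q,k))"
      using ik by (intro orth_entry) auto
    also have "\<dots> = DG (2*n) d $$(2*n-1-(2*n-1-i), i) * DG (2*n) d $$(2*n-1-i,k)"
      using ik by (intro sum_only) (auto simp: DG_idx)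
    also have "\<dots> = DG (2*n) d $$(i, i) * DG (2*n) d $$(2*n-1-i,k)"
    proof -
      have "2*n-1-(2*n-1-i) = i" using ik by auto
      then show ?thesis by simp
    qed
    also have "\<dots> = Smat n $$ (i,k)"
      using ik assms by (auto simp: DG_idx Smat_idx)
    finally show "(transpose_mat (DG (2*n) d) * Smat n * DG (2*n) d)$$(i,k) = Smat n $$ (i,k)" .
  qed (auto simp: Smat_def DG_def)
  then show ?thesis by (simp add: orth_grp_def)
qed


lemma ee_cases: "n \<ge> 3 \<Longrightarrow> ee n i j = (if i = n-2 \<and> j = n-1 then 1 else if i = n \<and> j = n+1 then -1 else 0)"
  by (auto simp: ee_def)
lemma ff_cases: "n \<ge> 3 \<Longrightarrow> ff n i j = (if i = n \<and> j = n-2 then 1 else if i = n+1 \<and> j = n-1 then -1 else 0)"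
  by (auto simp: ff_def)

lemma weight_inv:
  fixes d :: "nat \<Rightarrow> 'a::field_char_0" and c :: "nat \<Rightarrow> nat \<Rightarrow> 'a"
  assumes n3: "n \<ge> 3" and dnz: "\<forall>i<2*n. d i \<noteq> 0" and dinv: "\<forall>i<2*n. d (2*n-1-i) * d i = 1"
    and e1: "d (n-1) = \<eta>" and e2: "d n = \<eta>" and ee1: "\<eta> * \<eta> = 1"
    and ijkl: "i < 2*n" "j < 2*n" "k < 2*n" "l < 2*n"
  shows "d i * r_BD n c i j k l * inverse (d j) * d k * inverse (d l) = r_BD n c i j k l"
proof -
  have dI: "\<And>i. i < 2*n \<Longrightarrow> d (2*n-1-i) = inverse (d i)"
    using dinv by (metis inverse_unique mult.commute)
  define w where "w = d i * inverse (d j) * (d k * inverse (d l))"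
  have dn: "d i \<noteq> 0" "d j \<noteq> 0" "d k \<noteq> 0" "d l \<noteq> 0" using dnz ijkl by auto
  have r0: "w * rzero n c i j k l = rzero n c i j k l"
  proof (cases "i = j \<and> k = l")
    case True
    then have "w = 1" unfolding w_def using dn by simp
    then show ?thesis by simp
  next
    case False
    then have "rzero n c i j k l = 0" by (intro rzero_off[OF ijkl]) auto
    then show ?thesis by simp
  qed
  have rp: "w * RP n i j k l = RP n i j k l"
  proof (cases "k = j \<and> l = i")
    case True
    then have "w = 1" unfolding w_def using dn by (simp add: field_simps)
    then show ?thesis by simp
  next
    case F1: False
    show ?thesis
    proof (cases "k = 2*n-1-i \<and> l = 2*n-1-j")
      case True
      then have "w = 1" unfolding w_def using dn dI ijkl by (simp add: field_simps)
      then show ?thesis by simp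
    next
      case F2: False
      have "RP n i j k l = (0::'a)" unfolding RP_def if_not_P[OF F1] if_not_P[OF F2] by simp
      then show ?thesis by simp
    qed
  qed
  define lam where "lam = d (n-2) * inverse \<eta>"
  have eta0: "\<eta> \<noteq> 0" using ee1 by auto
  have ieta: "inverse \<eta> = \<eta>" using ee1 by (metis inverse_unique)
  have dn2: "d (n-2) \<noteq> 0" using dnz n3 by auto
  have dn1: "d (n+1) = inverse (d (n-2))"
  proof -
    have "2*n-1-(n-2) = n+1" using n3 by auto
    then show ?thesis using dI[of "n-2"] n3 by auto
  qed
  have l0: "lam \<noteq> 0" unfolding lam_def using dn2 eta0 by simp
  have eeW: "d a * inverse (d b) * ee n a b = lam * ee n a b" for a b
  proof (cases "a = n-2 \<and> b = n-1")
    case True then show ?thesis using n3 e1 by (simp add: ee_cases lam_def)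
  next
    case F: False
    show ?thesis
    proof (cases "a = n \<and> b = n+1")
      case True
      then have "ee n a b = (-1::'a)" using n3 F by (auto simp add: ee_cases)
      moreover have "d a * inverse (d b) = lam" using True e2 dn1 ieta by (simp add: lam_def mult.commute)
      ultimately show ?thesis by simp
    next
      case False
      then have "ee n a b = (0::'a)" using F n3 by (simp add: ee_cases)
      then show ?thesis by simp
    qed
  qed
  have ffW: "d a * inverse (d b) * ff n a b = inverse lam * ff n a b" for a b
  proof (cases "a = n \<and> b = n-2")
    case True then show ?thesis using n3 e2 ieta by (simp add: ff_cases lam_def mult.commute)
  next
    case F: False
    show ?thesis
    proof (cases "a = n+1 \<and> b = n-1")
      case True
      then have "ff n a b = (-1::'a)" using n3 F by (auto simp add: ff_cases)
      moreover have "d a * inverse (d b) = inverse lam" using True e1 dn1 ieta by (simp add: lam_def)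
      ultimately show ?thesis by simp
    next
      case False
      then have "ff n a b = (0::'a)" using F n3 by (simp add: ff_cases)
      then show ?thesis by simp
    qed
  qed
  have wW: "w * (ee n i j * ff n k l - ff n i j * ee n k l) = ee n i j * ff n k l - ff n i j * ee n k l"
  proof -
    have "w * (ee n i j * ff n k l - ff n i j * ee n k l)
        = (d i * inverse (d j) * ee n i j) * (d k * inverse (d l) * ff n k l)
          - (d i * inverse (d j) * ff n i j) * (d k * inverse (d l) * ee n k l)"
      unfolding w_def by (simp add: algebra_simps)
    also have "\<dots> = (lam * inverse lam) * (ee n i j * ff n k l) - (lam * inverse lam) * (ff n i j * ee n k l)"
      unfolding eeW ffW by (simp add: algebra_simps)
    also have "\<dots> = ee n i j * ff n k l - ff n i j * ee n k l" using l0 by simp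
    finally show ?thesis .
  qed
  have "d i * r_BD n c i j k l * inverse (d j) * d k * inverse (d l) = w * r_BD n c i j k l"
    unfolding w_def by (simp add: algebra_simps)
  also have "\<dots> = w * rzero n c i j k l + w * RP n i j k l + w * (ee n i j * ff n k l - ff n i j * ee n k l)"
    using n3 ijkl by (simp add: rBD_eq algebra_simps)
  also have "\<dots> = r_BD n c i j k l" unfolding r0 rp wW using n3 ijkl by (simp add: rBD_eq)
  finally show ?thesis .
qed


lemma sup_dir:
  fixes c :: "nat \<Rightarrow> nat \<Rightarrow> 'a::field_char_0"
  assumes n3: "n \<ge> 3" and t: "\<forall>i<n-1. t i \<noteq> 0" and eta: "\<eta> = 1 \<or> \<eta> = -1"
  shows "Tdiag n t \<eta> \<in> centr n (r_BD n c)"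
proof -
  define d where "d i = (if i < n-1 then t i else if i = n-1 \<or> i = n then \<eta> else inverse (t (mir n i)))" for i
  have T: "Tdiag n t \<eta> = DG (2*n) d"
  proof (rule eq_matI)
    fix i j assume "i < dim_row (DG (2*n) d)" "j < dim_col (DG (2*n) d)"
    then have "i < 2*n" "j < 2*n" by (auto simp: DG_def)
    then show "Tdiag n t \<eta> $$ (i,j) = DG (2*n) d $$ (i,j)" by (simp add: Tdiag_def DG_def d_def)
  qed (auto simp: Tdiag_def DG_def)
  have eta2: "\<eta> * \<eta> = 1" using eta by auto
  have dnz: "\<forall>i<2*n. d i \<noteq> 0"
  proof (intro allI impI)
    fix i assume i: "i < 2*n"
    show "d i \<noteq> 0"
    proof (cases "i < n-1 \<or> i = n-1 \<or> i = n")
      case True then show ?thesis using t eta by (auto simp: d_def)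
    next
      case False
      then have "mir n i < n-1" using i by (auto simp: mir_def)
      then show ?thesis using False t by (auto simp: d_def)
    qed
  qed
  have dinv: "\<forall>i<2*n. d (2*n-1-i) * d i = 1"
  proof (intro allI impI)
    fix i assume i: "i < 2*n"
    consider "i < n-1" | "i = n-1" | "i = n" | "n < i" using i by linarith
    then show "d (2*n-1-i) * d i = 1"
    proof cases
      case 1
      then have a: "\<not> (2*n-1-i < n-1 \<or> 2*n-1-i = n-1 \<or> 2*n-1-i = n)" "mir n (2*n-1-i) = i"
        using i by (auto simp: mir_def)
      have "d (2*n-1-i) = inverse (t i)" using a unfolding d_def by auto
      then show ?thesis using 1 t by (simp add: d_def)
    next
      case 2
      then have "2*n-1-i = n" using n3 by auto
      then show ?thesis using 2 eta2 by (simp add: d_def)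
    next
      case 3
      then have "2*n-1-i = n-1" using n3 by auto
      then show ?thesis using 3 eta2 by (simp add: d_def)
    next
      case 4
      then have a: "2*n-1-i < n-1" "mir n i = 2*n-1-i" using i by (auto simp: mir_def)
      have "d i = inverse (t (2*n-1-i))" using a 4 unfolding d_def by auto
      moreover have "t (2*n-1-i) \<noteq> 0" using t a by auto
      ultimately show ?thesis using a by (simp add: d_def)
    qed
  qed
  have e1: "d (n-1) = \<eta>" "d n = \<eta>" by (auto simp: d_def)
  have orth: "DG (2*n) d \<in> orth_grp n" by (rule DG_orth[OF dinv])
  have "AdAd (2*n) (DG (2*n) d) (r_BD n c) = r_BD n c"
  proof (intro ext)
    fix i j k l
    show "AdAd (2*n) (DG (2*n) d) (r_BD n c) i j k l = r_BD n c i j k l"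
    proof (cases "i < 2*n \<and> j < 2*n \<and> k < 2*n \<and> l < 2*n")
      case True
      then show ?thesis using AdAd_DG[OF dnz] weight_inv[OF n3 dnz dinv e1 eta2] by auto
    next
      case False
      then show ?thesis by (simp only: AdAd_out[OF False] rBD_out[OF False])
    qed
  qed
  then show ?thesis using orth T by (simp add: centr_def)
qed

theorem mainTheorem11:
  fixes n :: nat and c :: "nat \<Rightarrow> nat \<Rightarrow> Kbar"
  assumes "n \<ge> 3"
    and "admissible_r0 n c"
  shows "centr n (r_BD n c) =
    {Tdiag n t \<eta> | t \<eta>. (\<forall>i < n - 1. t i \<noteq> 0) \<and> (\<eta> = 1 \<or> \<eta> = -1)}"
proof
  show "centr n (r_BD n c) \<subseteq> {Tdiag n t \<eta> | t \<eta>. (\<forall>i < n - 1. t i \<noteq> 0) \<and> (\<eta> = 1 \<or> \<eta> = -1)}"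
  proof
    fix M assume "M \<in> centr n (r_BD n c)"
    then have "M \<in> orth_grp n" "AdAd (2*n) M (r_BD n c) = r_BD n c" by (auto simp: centr_def)
    from sub_dir[OF assms this] show "M \<in> {Tdiag n t \<eta> | t \<eta>. (\<forall>i < n - 1. t i \<noteq> 0) \<and> (\<eta> = 1 \<or> \<eta> = -1)}"
      by blast
  qed
  show "{Tdiag n t \<eta> | t \<eta>. (\<forall>i < n - 1. t i \<noteq> 0) \<and> (\<eta> = 1 \<or> \<eta> = -1)} \<subseteq> centr n (r_BD n c)"
    using sup_dir[OF assms(1)] by blast
qed


end
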